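(* Let $n\geqslant 1$ and $m\geqslant 0$ be integers, and let $$P(x_1,\ldots,x_n)=\sum_{\substack{j_1,\ldots,j_n\geqslant 0\\ j_1+\cdots+j_n=m}} c_{j_1,\ldots,j_n}x_1^{j_1}\cdots x_n^{j_n}\in\mathbb{C}[x_1,\ldots,x_n]$$ and $$P^*(x_1,\ldots,x_n)=\sum_{\substack{j_1,\ldots,j_n\geqslant 0\\ j_1+\cdots+j_n=m}} c_{j_1,\ldots,j_n}(x_1)_{j_1}\cdots(x_n)_{j_n}.$$ Suppose $P\neq 0$ and $\deg P\leqslant k_1+\cdots+k_n$ where $k_1,\ldots,k_n$ are nonnegative integers. Then the coefficient of $x_1^{k_1}\cdots x_n^{k_n}$ in $$P(x_1,\ldots,x_n)(x_1+\cdots+x_n)^{k_1+\cdots+k_n-\deg P}$$ equals $$\frac{\left(\sum_{i=1}^n k_i-\deg P\right)!}{k_1!\cdots k_n!}\,P^*(k_1,\ldots,k_n).$$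
   Context: $(x)_0=1$ and $(x)_r=x(x-1)\cdots(x-r+1)$ for positive integers $r$ (falling factorial). *)

theory Defs
  imports Complex_Main "HOL-Library.Poly_Mapping"
begin

text \<open>Multivariate polynomials over C in variables x_0,...,x_{n-1}:
  finitely supported maps from exponent vectors (nat =>0 nat) to complex,
  with the convolution product of Poly_Mapping.\<close>

type_synonym cpoly = "(nat \<Rightarrow>\<^sub>0 nat) \<Rightarrow>\<^sub>0 complex"

definition var :: "nat \<Rightarrow> cpoly" where
  "var i = Poly_Mapping.single (Poly_Mapping.single i 1) 1"

definition mon_deg :: "(nat \<Rightarrow>\<^sub>0 nat) \<Rightarrow> nat" where
  "mon_deg \<alpha> = (\<Sum>i\<in>Poly_Mapping.keys \<alpha>. Poly_Mapping.lookup \<alpha> i)"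

definition total_deg :: "cpoly \<Rightarrow> nat" where
  "total_deg P = Max (mon_deg ` Poly_Mapping.keys P)"

definition falling :: "complex \<Rightarrow> nat \<Rightarrow> complex" where
  "falling x r = (\<Prod>i<r. x - of_nat i)"

definition pstar_eval :: "nat \<Rightarrow> cpoly \<Rightarrow> (nat \<Rightarrow> complex) \<Rightarrow> complex" where
  "pstar_eval n P y = (\<Sum>\<alpha>\<in>Poly_Mapping.keys P. Poly_Mapping.lookup P \<alpha> * (\<Prod>i<n. falling (y i) (Poly_Mapping.lookup \<alpha> i)))"

end

theory Submission imports Defs begin

lemma le_add_iff:
  fixes k l q :: "nat \<Rightarrow>\<^sub>0 nat"
  shows "(k = l + q) \<longleftrightarrow> (\<forall>i. Poly_Mapping.lookup l i \<le> Poly_Mapping.lookup k i) \<and> q = k - l"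
proof
  assume "k = l + q" thus "(\<forall>i. Poly_Mapping.lookup l i \<le> Poly_Mapping.lookup k i) \<and> q = k - l"
    by (auto simp: lookup_add intro!: poly_mapping_eqI simp: lookup_minus)
next
  assume "(\<forall>i. Poly_Mapping.lookup l i \<le> Poly_Mapping.lookup k i) \<and> q = k - l"
  thus "k = l + q"
    by (auto simp: lookup_add intro!: poly_mapping_eqI simp: lookup_minus)
qed

lemma lookup_mult_keys:
  fixes f g :: cpoly
  shows "Poly_Mapping.lookup (f * g) k = (\<Sum>l\<in>Poly_Mapping.keys f. Poly_Mapping.lookup f l *
     (if (\<forall>i. Poly_Mapping.lookup l i \<le> Poly_Mapping.lookup k i) then Poly_Mapping.lookup g (k - l) else 0))"
proof -
  have inner: "(\<Sum>q. Poly_Mapping.lookup g q when k = l + q) =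
     (if (\<forall>i. Poly_Mapping.lookup l i \<le> Poly_Mapping.lookup k i) then Poly_Mapping.lookup g (k - l) else 0)" for l
  proof (cases "\<forall>i. Poly_Mapping.lookup l i \<le> Poly_Mapping.lookup k i")
    case True
    then have "(\<Sum>q. Poly_Mapping.lookup g q when k = l + q) = (\<Sum>q. Poly_Mapping.lookup g q when q = k - l)"
      using True le_add_iff[of k l] by (intro Sum_any.cong) (auto simp: when_def)
    then show ?thesis using True by simp
  next
    case False
    then have "(\<lambda>q. Poly_Mapping.lookup g q when k = l + q) = (\<lambda>q. 0)"
      using le_add_iff[of k l] by (auto simp: fun_eq_iff)
    then show ?thesis using False by (simp only: Sum_any.neutral) simp
  qed
  have "Poly_Mapping.lookup (f * g) k = (\<Sum>l. Poly_Mapping.lookup f l * (if (\<forall>i. Poly_Mapping.lookup l i \<le> Poly_Mapping.lookup k i) then Poly_Mapping.lookup g (k - l) else 0))"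
    by (simp add: lookup_mult inner)
  also have "\<dots> = (\<Sum>l\<in>Poly_Mapping.keys f. Poly_Mapping.lookup f l *
     (if (\<forall>i. Poly_Mapping.lookup l i \<le> Poly_Mapping.lookup k i) then Poly_Mapping.lookup g (k - l) else 0))"
    by (rule Sum_any.expand_superset) (auto simp: in_keys_iff)
  finally show ?thesis .
qed

lemma lookup_var_mult:
  fixes Q :: cpoly
  shows "Poly_Mapping.lookup (var i * Q) b = (if 1 \<le> Poly_Mapping.lookup b i then Poly_Mapping.lookup Q (b - Poly_Mapping.single i 1) else 0)"
proof -
  have e: "(\<forall>j. Poly_Mapping.lookup (Poly_Mapping.single i (1::nat)) j \<le> Poly_Mapping.lookup b j) \<longleftrightarrow> 1 \<le> Poly_Mapping.lookup b i"
    by (auto simp: lookup_single when_def)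
  show ?thesis
    unfolding lookup_mult_keys var_def using e by simp
qed

lemma lk_minus_single:
  "Poly_Mapping.lookup (b - Poly_Mapping.single i (c::nat)) j = Poly_Mapping.lookup b j - (if j = i then c else 0)"
  by (simp add: lookup_minus lookup_single when_def)

lemma sum_minus_single:
  fixes b :: "nat \<Rightarrow>\<^sub>0 nat"
  assumes "i < n" "1 \<le> Poly_Mapping.lookup b i"
  shows "(\<Sum>j<n. Poly_Mapping.lookup (b - Poly_Mapping.single i (1::nat)) j) = (\<Sum>j<n. Poly_Mapping.lookup b j) - 1"
proof -
  have fi: "finite {..<n}" "i \<in> {..<n}" using assms by auto
  have "(\<Sum>j<n. Poly_Mapping.lookup (b - Poly_Mapping.single i (1::nat)) j)
     = Poly_Mapping.lookup b i - 1 + (\<Sum>j\<in>{..<n}-{i}. Poly_Mapping.lookup b j)"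
    by (simp add: sum.remove[OF fi] lk_minus_single)
  also have "\<dots> = (\<Sum>j<n. Poly_Mapping.lookup b j) - 1"
    using assms by (simp add: sum.remove[OF fi])
  finally show ?thesis .
qed

lemma prod_minus_single:
  fixes b :: "nat \<Rightarrow>\<^sub>0 nat"
  assumes "i < n" "1 \<le> Poly_Mapping.lookup b i"
  shows "(\<Prod>j<n. fact (Poly_Mapping.lookup (b - Poly_Mapping.single i (1::nat)) j)) * Poly_Mapping.lookup b i
     = (\<Prod>j<n. fact (Poly_Mapping.lookup b j) :: nat)"
proof -
  have fi: "finite {..<n}" "i \<in> {..<n}" using assms by auto
  have "(\<Prod>j\<in>{..<n}-{i}. fact (Poly_Mapping.lookup (b - Poly_Mapping.single i (1::nat)) j))
     = (\<Prod>j\<in>{..<n}-{i}. fact (Poly_Mapping.lookup b j) :: nat)"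
    by (rule prod.cong) (auto simp: lk_minus_single)
  moreover have "fact (Poly_Mapping.lookup b i - 1) * Poly_Mapping.lookup b i = (fact (Poly_Mapping.lookup b i) :: nat)"
  proof -
    obtain c where c: "Poly_Mapping.lookup b i = Suc c" using assms(2) by (cases "Poly_Mapping.lookup b i") auto
    show ?thesis unfolding c by simp
  qed
  moreover have "fact (Poly_Mapping.lookup (b - Poly_Mapping.single i (1::nat)) i) = (fact (Poly_Mapping.lookup b i - 1) :: nat)"
    by (simp add: lk_minus_single)
  ultimately show ?thesis
    unfolding prod.remove[OF fi, of "\<lambda>j. fact (Poly_Mapping.lookup b j)"]
      prod.remove[OF fi, of "\<lambda>j. fact (Poly_Mapping.lookup (b - Poly_Mapping.single i 1) j)"]
    by (metis mult.commute mult.left_commute)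
qed

lemma keys_minus_single:
  fixes b :: "nat \<Rightarrow>\<^sub>0 nat"
  assumes "i < n"
  shows "Poly_Mapping.keys (b - Poly_Mapping.single i (1::nat)) \<subseteq> {..<n} \<longleftrightarrow> Poly_Mapping.keys b \<subseteq> {..<n}"
proof
  assume h: "Poly_Mapping.keys (b - Poly_Mapping.single i 1) \<subseteq> {..<n}"
  show "Poly_Mapping.keys b \<subseteq> {..<n}"
  proof
    fix x assume "x \<in> Poly_Mapping.keys b"
    then have "Poly_Mapping.lookup b x \<noteq> 0" by (simp add: in_keys_iff)
    show "x \<in> {..<n}"
    proof (cases "x = i")
      case False
      then have "x \<in> Poly_Mapping.keys (b - Poly_Mapping.single i 1)"
        using \<open>Poly_Mapping.lookup b x \<noteq> 0\<close> by (simp add: in_keys_iff lk_minus_single)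
      then show ?thesis using h by blast
    qed (use assms in auto)
  qed
next
  assume h: "Poly_Mapping.keys b \<subseteq> {..<n}"
  show "Poly_Mapping.keys (b - Poly_Mapping.single i 1) \<subseteq> {..<n}"
  proof
    fix x assume "x \<in> Poly_Mapping.keys (b - Poly_Mapping.single i 1)"
    then have "Poly_Mapping.lookup b x \<noteq> 0" by (simp add: in_keys_iff lk_minus_single split: if_splits)
    then have "x \<in> Poly_Mapping.keys b" by (simp add: in_keys_iff)
    then show "x \<in> {..<n}" using h by blast
  qed
qed


lemma lookup_pow_sum_var:
  "Poly_Mapping.lookup ((\<Sum>i<n. var i) ^ d) b =
    (if Poly_Mapping.keys b \<subseteq> {..<n} \<and> (\<Sum>i<n. Poly_Mapping.lookup b i) = d
     then of_nat (fact d) / of_nat (\<Prod>i<n. fact (Poly_Mapping.lookup b i)) else 0)"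
proof (induction d arbitrary: b)
  case 0
  have "(Poly_Mapping.keys b \<subseteq> {..<n} \<and> (\<Sum>i<n. Poly_Mapping.lookup b i) = 0) \<longleftrightarrow> b = 0"
  proof
    assume h: "Poly_Mapping.keys b \<subseteq> {..<n} \<and> (\<Sum>i<n. Poly_Mapping.lookup b i) = 0"
    show "b = 0"
    proof (rule poly_mapping_eqI)
      fix j
      show "Poly_Mapping.lookup b j = Poly_Mapping.lookup 0 j"
      proof (cases "j < n")
        case True then show ?thesis using h by simp
      next
        case False then have "j \<notin> Poly_Mapping.keys b" using h by auto
        then show ?thesis by (simp add: in_keys_iff)
      qed
    qed
  qed auto
  then show ?case by (auto simp: lookup_one when_def)
next
  case (Suc d)
  let ?S = "(\<Sum>i<n. var i)"
  let ?P = "\<Prod>i<n. fact (Poly_Mapping.lookup b i) :: nat"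
  have P0: "(of_nat ?P :: complex) \<noteq> 0" by simp
  have "Poly_Mapping.lookup (?S ^ Suc d) b = (\<Sum>i<n. Poly_Mapping.lookup (var i * ?S ^ d) b)"
    by (simp add: sum_distrib_right lookup_sum)
  also have "\<dots> = (\<Sum>i<n. if 1 \<le> Poly_Mapping.lookup b i then
       Poly_Mapping.lookup (?S ^ d) (b - Poly_Mapping.single i 1) else 0)"
    by (simp add: lookup_var_mult)
  finally have eq: "Poly_Mapping.lookup (?S ^ Suc d) b = \<dots>" .
  show ?case
  proof (cases "Poly_Mapping.keys b \<subseteq> {..<n} \<and> (\<Sum>i<n. Poly_Mapping.lookup b i) = Suc d")
    case True
    have t: "(if 1 \<le> Poly_Mapping.lookup b i then
       Poly_Mapping.lookup (?S ^ d) (b - Poly_Mapping.single i 1) else 0)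
       = of_nat (fact d) * of_nat (Poly_Mapping.lookup b i) / of_nat ?P" if "i \<in> {..<n}" for i
    proof (cases "1 \<le> Poly_Mapping.lookup b i")
      case True': True
      have pr: "(\<Prod>j<n. fact (Poly_Mapping.lookup (b - Poly_Mapping.single i (1::nat)) j)) * Poly_Mapping.lookup b i = ?P"
        using prod_minus_single[of i n b] that True' by simp
      have "Poly_Mapping.lookup (?S ^ d) (b - Poly_Mapping.single i 1) =
          of_nat (fact d) / of_nat (\<Prod>j<n. fact (Poly_Mapping.lookup (b - Poly_Mapping.single i (1::nat)) j))"
        using Suc.IH True True' that keys_minus_single[of i n b] sum_minus_single[of i n b] by simp
      also have "\<dots> = of_nat (fact d) * of_nat (Poly_Mapping.lookup b i) / of_nat ?P"
        unfolding pr[symmetric] using True' by (simp add: field_simps)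
      finally show ?thesis using True' by simp
    qed simp
    have "Poly_Mapping.lookup (?S ^ Suc d) b = (\<Sum>i<n. of_nat (fact d) * of_nat (Poly_Mapping.lookup b i) / of_nat ?P)"
      unfolding eq using t by (rule sum.cong[OF refl])
    also have "\<dots> = of_nat (fact d) * of_nat (\<Sum>i<n. Poly_Mapping.lookup b i) / (of_nat ?P :: complex)"
      by (simp add: sum_divide_distrib[symmetric] sum_distrib_left)
    also have "\<dots> = of_nat (fact (Suc d)) / of_nat ?P"
      using True by (simp add: algebra_simps)
    finally show ?thesis using True by simp
  next
    case False
    have "(if 1 \<le> Poly_Mapping.lookup b i then
       Poly_Mapping.lookup (?S ^ d) (b - Poly_Mapping.single i 1) else 0) = 0" if "i \<in> {..<n}" for i
    proof (cases "1 \<le> Poly_Mapping.lookup b i")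
      case True
      have "(\<Sum>i<n. Poly_Mapping.lookup b i) \<ge> Poly_Mapping.lookup b i"
        using that by (intro member_le_sum) auto
      then show ?thesis
      using Suc.IH False True that keys_minus_single[of i n b] sum_minus_single[of i n b] by auto
    qed simp
    then have "Poly_Mapping.lookup (?S ^ Suc d) b = 0" unfolding eq by simp
    then show ?thesis by (subst if_not_P[OF False])
  qed
qed


lemma falling_fact:
  assumes "r \<le> a"
  shows "falling (of_nat a) r * of_nat (fact (a - r)) = (of_nat (fact a) :: complex)"
  using assms
proof (induction r)
  case 0 then show ?case by (simp add: falling_def)
next
  case (Suc r)
  have e: "a - r = Suc (a - Suc r)" using Suc.prems by simp
  have "falling (of_nat a) (Suc r) * of_nat (fact (a - Suc r))
      = falling (of_nat a) r * (of_nat (Suc (a - Suc r)) * of_nat (fact (a - Suc r)))"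
    using Suc.prems by (simp add: falling_def of_nat_diff algebra_simps)
  also have "\<dots> = falling (of_nat a) r * of_nat (fact (a - r))"
  proof -
    have "(fact (a - r) :: nat) = Suc (a - Suc r) * fact (a - Suc r)"
      by (simp only: e fact_Suc of_nat_id)
    then have "(of_nat (fact (a - r)) :: complex) = of_nat (Suc (a - Suc r)) * of_nat (fact (a - Suc r))"
      by (metis of_nat_mult)
    then show ?thesis by simp
  qed
  also have "\<dots> = of_nat (fact a)" using Suc by simp
  finally show ?case .
qed

lemma falling_zero:
  assumes "a < r"
  shows "falling (of_nat a) r = 0"
  unfolding falling_def using assms by (intro prod_zero) (auto intro!: bexI[of _ a])


theorem lemma2p1:
  fixes n m :: nat and P :: cpoly and k :: "nat \<Rightarrow>\<^sub>0 nat"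
  assumes "n \<ge> 1"
    and hom: "\<forall>\<alpha>\<in>Poly_Mapping.keys P. Poly_Mapping.keys \<alpha> \<subseteq> {..<n} \<and> (\<Sum>i<n. Poly_Mapping.lookup \<alpha> i) = m"
    and "P \<noteq> 0"
    and k_vars: "Poly_Mapping.keys k \<subseteq> {..<n}"
    and "total_deg P \<le> (\<Sum>i<n. Poly_Mapping.lookup k i)"
  shows "Poly_Mapping.lookup (P * (\<Sum>i<n. var i) ^ ((\<Sum>i<n. Poly_Mapping.lookup k i) - total_deg P)) k
       = of_nat (fact ((\<Sum>i<n. Poly_Mapping.lookup k i) - total_deg P)) / of_nat (\<Prod>i<n. fact (Poly_Mapping.lookup k i))
         * pstar_eval n P (\<lambda>i. of_nat (Poly_Mapping.lookup k i))"
proof -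
  have md: "mon_deg \<alpha> = m" if "\<alpha> \<in> Poly_Mapping.keys P" for \<alpha>
  proof -
    have "mon_deg \<alpha> = (\<Sum>i<n. Poly_Mapping.lookup \<alpha> i)"
      unfolding mon_deg_def using hom that
      by (intro sum.mono_neutral_left) (auto simp: in_keys_iff)
    then show ?thesis using hom that by simp
  qed
  have ne: "Poly_Mapping.keys P \<noteq> {}" using assms(3) by simp
  obtain a0 where a0: "a0 \<in> Poly_Mapping.keys P" using ne by blast
  have "mon_deg ` Poly_Mapping.keys P = {m}"
  proof
    show "mon_deg ` Poly_Mapping.keys P \<subseteq> {m}" using md by blast
    show "{m} \<subseteq> mon_deg ` Poly_Mapping.keys P" using md[OF a0] a0 by force
  qed
  then have tdm: "total_deg P = m" unfolding total_deg_def by simp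
  define K where "K = (\<Sum>i<n. Poly_Mapping.lookup k i)"
  define d where "d = K - m"
  have mK: "m \<le> K" using assms(5) tdm K_def by simp
  define F where "F = (\<Prod>i<n. fact (Poly_Mapping.lookup k i) :: nat)"
  have F0: "(of_nat F :: complex) \<noteq> 0" unfolding F_def by simp
  let ?S = "(\<Sum>i<n. var i)"
  have tm: "Poly_Mapping.lookup P \<alpha> * (if (\<forall>i. Poly_Mapping.lookup \<alpha> i \<le> Poly_Mapping.lookup k i)
        then Poly_Mapping.lookup (?S ^ d) (k - \<alpha>) else 0)
      = of_nat (fact d) / of_nat F * (Poly_Mapping.lookup P \<alpha> *
          (\<Prod>i<n. falling (of_nat (Poly_Mapping.lookup k i)) (Poly_Mapping.lookup \<alpha> i)))"
    if a: "\<alpha> \<in> Poly_Mapping.keys P" for \<alpha>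
  proof (cases "\<forall>i. Poly_Mapping.lookup \<alpha> i \<le> Poly_Mapping.lookup k i")
    case True
    have keys_d: "Poly_Mapping.keys (k - \<alpha>) \<subseteq> {..<n}"
    proof
      fix x assume "x \<in> Poly_Mapping.keys (k - \<alpha>)"
      then have "Poly_Mapping.lookup k x \<noteq> 0" by (auto simp: in_keys_iff lookup_minus)
      then have "x \<in> Poly_Mapping.keys k" by (simp add: in_keys_iff)
      then show "x \<in> {..<n}" using k_vars by blast
    qed
    have "(\<Sum>i<n. Poly_Mapping.lookup (k - \<alpha>) i) = (\<Sum>i<n. Poly_Mapping.lookup k i - Poly_Mapping.lookup \<alpha> i)"
      by (simp add: lookup_minus)
    also have "\<dots> = K - m" unfolding K_def using True hom a
      by (subst sum_subtractf_nat) auto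
    finally have sd: "(\<Sum>i<n. Poly_Mapping.lookup (k - \<alpha>) i) = d" using d_def by simp
    define Q where "Q = (\<Prod>i<n. fact (Poly_Mapping.lookup (k - \<alpha>) i) :: nat)"
    have Q0: "(of_nat Q :: complex) \<noteq> 0" unfolding Q_def by simp
    have look: "Poly_Mapping.lookup (?S ^ d) (k - \<alpha>) = of_nat (fact d) / of_nat Q"
      using lookup_pow_sum_var[of n d "k - \<alpha>"] keys_d sd Q_def by simp
    have RQ: "(\<Prod>i<n. falling (of_nat (Poly_Mapping.lookup k i)) (Poly_Mapping.lookup \<alpha> i)) * of_nat Q
        = (of_nat F :: complex)"
    proof -
      have "(\<Prod>i<n. falling (of_nat (Poly_Mapping.lookup k i)) (Poly_Mapping.lookup \<alpha> i)) * of_nat Q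
         = (\<Prod>i<n. falling (of_nat (Poly_Mapping.lookup k i)) (Poly_Mapping.lookup \<alpha> i)
              * of_nat (fact (Poly_Mapping.lookup k i - Poly_Mapping.lookup \<alpha> i)))"
        unfolding Q_def by (simp add: prod.distrib lookup_minus)
      also have "\<dots> = (\<Prod>i<n. of_nat (fact (Poly_Mapping.lookup k i)))"
        using True by (intro prod.cong refl falling_fact) auto
      also have "\<dots> = of_nat F" unfolding F_def by simp
      finally show ?thesis .
    qed
    show ?thesis using True look Q0 F0 RQ[symmetric]
      by (simp add: field_simps)
  next
    case False
    then obtain i where i: "Poly_Mapping.lookup k i < Poly_Mapping.lookup \<alpha> i" by (auto simp: not_le)
    then have "i \<in> Poly_Mapping.keys \<alpha>" by (auto simp: in_keys_iff)
    then have "i < n" using hom a by auto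
    then have z: "(\<Prod>i<n. falling (of_nat (Poly_Mapping.lookup k i)) (Poly_Mapping.lookup \<alpha> i)) = 0"
      using i falling_zero by (intro prod_zero) auto
    show ?thesis by (subst if_not_P[OF False], simp only: z mult_zero_right mult_zero_left)
  qed
  have "Poly_Mapping.lookup (P * ?S ^ d) k = (\<Sum>\<alpha>\<in>Poly_Mapping.keys P. Poly_Mapping.lookup P \<alpha> *
     (if (\<forall>i. Poly_Mapping.lookup \<alpha> i \<le> Poly_Mapping.lookup k i) then Poly_Mapping.lookup (?S ^ d) (k - \<alpha>) else 0))"
    by (rule lookup_mult_keys)
  also have "\<dots> = (\<Sum>\<alpha>\<in>Poly_Mapping.keys P. of_nat (fact d) / of_nat F * (Poly_Mapping.lookup P \<alpha> *
          (\<Prod>i<n. falling (of_nat (Poly_Mapping.lookup k i)) (Poly_Mapping.lookup \<alpha> i))))"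
    using tm by (rule sum.cong[OF refl])
  also have "\<dots> = of_nat (fact d) / of_nat F * pstar_eval n P (\<lambda>i. of_nat (Poly_Mapping.lookup k i))"
    unfolding pstar_eval_def by (simp add: sum_distrib_left)
  finally show ?thesis unfolding d_def K_def F_def tdm .
qed

end
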